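(* Let $\Omega\subset\mathbb{R}^d$ be a bounded open set, $q\ge0$ an integer and $k\in C^q(\overline{\Omega}\times\overline{\Omega})$. Let $\{(Y_{\vec h},\vec w_{\vec h})\}_{\vec h>0}$ be a stable quadrature scheme and $\{(X_{\vec h},Y_{\vec h},R_{\vec h})\}_{\vec h>0}$ a stable reconstruction scheme. Then the family of linear operators $\mathcal{K}_{\vec h}\colon C^q(\overline{\Omega})\to C^q(\overline{\Omega})$, $\vec h=(h_X,h_Y)$ with $h_X,h_Y>0$, \[ (\mathcal{K}_{\vec h}v)(x)=\sum_{i=1}^{|Y_{\vec h}|}w_{\vec h,i}\,k(x,y_{\vec h,i})\sum_{j=1}^{|X_{\vec h}|}(R_{\vec h})_{ij}\,v(x_{\vec h,j}), \] is collectively compact.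
   Context: $C^q(\overline{\Omega})$ is the Banach space of functions whose partial derivatives up to order $q$ exist on $\Omega$ and extend continuously to $\overline{\Omega}$, with norm $\|v\|_{C^q}=\sum_{|\alpha|\le q}\frac1{\alpha!}\max_{\overline\Omega}|\partial^\alpha v|$. A stable quadrature scheme is a family of finite node sets $Y_{\vec h}=\{y_{\vec h,i}\}\subset\overline\Omega$ and weights $\vec w_{\vec h}\in\mathbb{R}^{|Y_{\vec h}|}$ (depending only on $h_Y$, with $|Y_{\vec h}|\to\infty$ as $h_Y\to0^+$) such that $\|\vec w_{\vec h}\|_1\le C_Q$ for all $\vec h$. A reconstruction scheme is a family of triples $(X_{\vec h},Y_{\vec h},R_{\vec h})$ with $X_{\vec h}=\{x_{\vec h,j}\}\subset\overline\Omega$ finite (depending only on $h_X$) and $R_{\vec h}$ a real $|Y_{\vec h}|\times|X_{\vec h}|$ matrix; it is stable if $\|R_{\vec h}\|_\infty\le C_I$ (maximum absolute row sum) for all $\vec h$. A family $\mathcal{T}$ of bounded operators on a Banach space $V$ is collectively compact if $\{Tv: T\in\mathcal{T},\ v\in V,\ \|v\|\le1\}$ is relatively compact in $V$. *)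

theory Defs
  imports "HOL-Analysis.Analysis"
begin

fun dpart :: "'a::euclidean_space list \<Rightarrow> ('a \<Rightarrow> real) \<Rightarrow> 'a \<Rightarrow> real" where
  "dpart [] f = f"
| "dpart (b # bs) f = (\<lambda>x. deriv (\<lambda>t. dpart bs f (x + t *\<^sub>R b)) 0)"

text \<open>Membership in C^q(closure Omega), Omega open: v is continuous on the closure, all
  partial derivatives up to order q exist on Omega (in every order of differentiation)
  and extend continuously to the closure.\<close>
definition Cq_on :: "'a::euclidean_space set \<Rightarrow> nat \<Rightarrow> ('a \<Rightarrow> real) \<Rightarrow> bool" where
  "Cq_on \<Omega> q v \<longleftrightarrow>
     continuous_on (closure \<Omega>) v \<and>
     (\<forall>bs. set bs \<subseteq> Basis \<and> bs \<noteq> [] \<and> length bs \<le> q \<longrightarrow>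
        (\<forall>x\<in>\<Omega>. (\<lambda>t. dpart (tl bs) v (x + t *\<^sub>R hd bs)) differentiable (at 0)) \<and>
        (\<exists>g. continuous_on (closure \<Omega>) g \<and> (\<forall>x\<in>\<Omega>. g x = dpart bs v x)))"

definition mindex :: "nat \<Rightarrow> ('a::euclidean_space \<Rightarrow> nat) set" where
  "mindex q = {\<alpha>. (\<forall>b. b \<notin> Basis \<longrightarrow> \<alpha> b = 0) \<and> (\<Sum>b\<in>Basis. \<alpha> b) \<le> q}"

definition mfact :: "('a::euclidean_space \<Rightarrow> nat) \<Rightarrow> real" where
  "mfact \<alpha> = (\<Prod>b\<in>Basis. fact (\<alpha> b))"

definition dmulti :: "('a::euclidean_space \<Rightarrow> nat) \<Rightarrow> ('a \<Rightarrow> real) \<Rightarrow> 'a \<Rightarrow> real" where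
  "dmulti \<alpha> v = dpart (SOME bs. set bs \<subseteq> Basis \<and> (\<forall>b. count_list bs b = \<alpha> b)) v"

text \<open>Supremum of |g| over S (= max over the closure of the continuous extension).\<close>
definition supn :: "'a set \<Rightarrow> ('a \<Rightarrow> real) \<Rightarrow> real" where
  "supn S g = (if S = {} then 0 else (SUP x\<in>S. \<bar>g x\<bar>))"

definition Cq_norm :: "'a::euclidean_space set \<Rightarrow> nat \<Rightarrow> ('a \<Rightarrow> real) \<Rightarrow> real" where
  "Cq_norm \<Omega> q v = (\<Sum>\<alpha>\<in>(mindex q :: ('a \<Rightarrow> nat) set). supn \<Omega> (dmulti \<alpha> v) / mfact \<alpha>)"

definition Cq_relcompact :: "'a::euclidean_space set \<Rightarrow> nat \<Rightarrow> ('a \<Rightarrow> real) set \<Rightarrow> bool" where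
  "Cq_relcompact \<Omega> q S \<longleftrightarrow>
     (\<forall>f::nat \<Rightarrow> 'a \<Rightarrow> real. (\<forall>n. f n \<in> S) \<longrightarrow>
        (\<exists>(r::nat\<Rightarrow>nat) g. strict_mono r \<and> Cq_on \<Omega> q g \<and>
               (\<lambda>n. Cq_norm \<Omega> q (\<lambda>x. f (r n) x - g x)) \<longlonglongrightarrow> 0))"

definition collectively_compact ::
  "'a::euclidean_space set \<Rightarrow> nat \<Rightarrow> 'i set \<Rightarrow> ('i \<Rightarrow> ('a \<Rightarrow> real) \<Rightarrow> ('a \<Rightarrow> real)) \<Rightarrow> bool" where
  "collectively_compact \<Omega> q I T \<longleftrightarrow>
     (\<forall>i\<in>I. \<forall>v. Cq_on \<Omega> q v \<longrightarrow> Cq_on \<Omega> q (T i v)) \<and>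
     (\<forall>i\<in>I. \<forall>v w a b. Cq_on \<Omega> q v \<longrightarrow> Cq_on \<Omega> q w \<longrightarrow>
        (\<forall>x\<in>closure \<Omega>. T i (\<lambda>y. a * v y + b * w y) x = a * T i v x + b * T i w x)) \<and>
     (\<forall>i\<in>I. \<exists>C. \<forall>v. Cq_on \<Omega> q v \<longrightarrow> Cq_norm \<Omega> q (T i v) \<le> C * Cq_norm \<Omega> q v) \<and>
     Cq_relcompact \<Omega> q {T i v | i v. i \<in> I \<and> Cq_on \<Omega> q v \<and> Cq_norm \<Omega> q v \<le> 1}"

end

theory Submission
  imports Defs "HOL-Complex_Analysis.Great_Picard"
begin

lemma real_deriv_uniform_limit:
  fixes f f' :: "nat \<Rightarrow> real \<Rightarrow> real" and g g' :: "real \<Rightarrow> real"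
  assumes "\<delta> > 0"
   and df: "\<And>n t. t \<in> {-\<delta>..\<delta>} \<Longrightarrow> (f n has_real_derivative f' n t) (at t)"
   and conv': "\<And>e. 0<e \<Longrightarrow> \<exists>N. \<forall>n\<ge>N. \<forall>t\<in>{-\<delta>..\<delta>}. \<bar>f' n t - g' t\<bar> < e"
   and conv: "\<And>e. 0<e \<Longrightarrow> \<exists>N. \<forall>n\<ge>N. \<forall>t\<in>{-\<delta>..\<delta>}. \<bar>f n t - g t\<bar> < e"
  shows "(g has_real_derivative g' 0) (at 0)"
proof -
  let ?S = "{-\<delta>..\<delta>::real}"
  have lim: "(\<lambda>n. f n t) \<longlonglongrightarrow> g t" if "t \<in> ?S" for t
  proof (rule LIMSEQ_I)
    fix r :: real assume "r > 0"
    then obtain N where "\<forall>n\<ge>N. \<forall>t\<in>?S. \<bar>f n t - g t\<bar> < r" using conv by blast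
    then have "\<forall>n\<ge>N. norm (f n t - g t) < r" using that by auto
    then show "\<exists>no. \<forall>n\<ge>no. norm (f n t - g t) < r" by blast
  qed
  have 0: "(0::real) \<in> ?S" using \<open>\<delta>>0\<close> by auto
  have cS: "convex ?S" by (simp add: convex_real_interval)
  have "\<exists>h. \<forall>x\<in>?S. (\<lambda>n. f n x) \<longlonglongrightarrow> h x \<and> (h has_derivative (\<lambda>u. g' x * u)) (at x within ?S)"
  proof (rule has_derivative_sequence [where g'="\<lambda>x u. g' x * u" and f'="\<lambda>n x u. f' n x * u" and f=f, OF cS _ _ 0 lim[OF 0]])
    show "((f n) has_derivative (\<lambda>u. f' n x * u)) (at x within ?S)" if "x \<in> ?S" for n x
      using has_field_derivative_at_within[OF df[OF that, of n]] unfolding has_field_derivative_def .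
    show "\<forall>\<^sub>F n in sequentially. \<forall>x\<in>?S. \<forall>h. norm (f' n x * h - g' x * h) \<le> e * norm h" if "e > 0" for e
    proof -
      obtain N where N: "\<forall>n\<ge>N. \<forall>t\<in>?S. \<bar>f' n t - g' t\<bar> < e" using conv' \<open>e>0\<close> by blast
      show ?thesis unfolding eventually_sequentially
      proof (intro exI allI impI ballI)
        fix n x h assume "N \<le> n" "x \<in> ?S"
        then have "\<bar>f' n x - g' x\<bar> \<le> e" using N by force
        then have "\<bar>f' n x - g' x\<bar> * \<bar>h\<bar> \<le> e * \<bar>h\<bar>" by (simp add: mult_right_mono)
        then show "norm (f' n x * h - g' x * h) \<le> e * norm h"
          by (simp add: abs_mult left_diff_distrib[symmetric])
      qed
    qed
  qed
  then obtain h where h: "\<And>x. x\<in>?S \<Longrightarrow> (\<lambda>n. f n x) \<longlonglongrightarrow> h x \<and> (h has_derivative (\<lambda>u. g' x * u)) (at x within ?S)"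
    by blast
  have hg: "h x = g x" if "x \<in> ?S" for x using h[OF that] lim[OF that] LIMSEQ_unique by blast
  have "0 \<in> interior ?S" using \<open>\<delta>>0\<close> by (simp add: interior_atLeastAtMost_real)
  then have "at 0 within ?S = at 0" by (rule at_within_interior)
  moreover have "(h has_derivative (\<lambda>u. g' 0 * u)) (at 0 within ?S)" using h[OF 0] by blast
  ultimately have "(h has_real_derivative g' 0) (at 0)"
    unfolding has_field_derivative_def by simp
  then show ?thesis
    by (rule has_field_derivative_transform_within_open[where S="{-\<delta><..<\<delta>}"])
       (use \<open>\<delta>>0\<close> hg in simp_all)
qed

lemma AA_finite:
  fixes F :: "nat \<Rightarrow> 'l \<Rightarrow> 'a::euclidean_space \<Rightarrow> real"
  assumes "finite L" "compact S"
   and "\<And>l. l \<in> L \<Longrightarrow> \<exists>M. \<forall>n. \<forall>x\<in>S. \<bar>F n l x\<bar> \<le> M"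
   and "\<And>l x e. l \<in> L \<Longrightarrow> x \<in> S \<Longrightarrow> 0 < e \<Longrightarrow> \<exists>d>0. \<forall>n y. y \<in> S \<and> norm (x - y) < d \<longrightarrow> \<bar>F n l x - F n l y\<bar> < e"
  shows "\<exists>(r::nat\<Rightarrow>nat) H. strict_mono r \<and> (\<forall>l\<in>L. continuous_on S (H l)) \<and>
           (\<forall>e>0. \<exists>N. \<forall>n\<ge>N. \<forall>l\<in>L. \<forall>x\<in>S. \<bar>F (r n) l x - H l x\<bar> < e)"
  using assms(1,3,4)
proof (induction L arbitrary: F rule: finite_induct)
  case empty
  have "strict_mono (id::nat\<Rightarrow>nat)" by (simp add: strict_mono_def)
  then show ?case
    by (intro exI[of _ "id::nat\<Rightarrow>nat"] exI[of _ "\<lambda>(l::'l) (x::'a). 0::real"]) (simp add: strict_mono_def)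
next
  case (insert l L)
  obtain M where M: "\<forall>n. \<forall>x\<in>S. \<bar>F n l x\<bar> \<le> M" using insert.prems(1) by blast
  obtain g k where g: "continuous_on S g" "strict_mono (k :: nat \<Rightarrow> nat)"
     "\<And>e. 0 < e \<Longrightarrow> \<exists>N. \<forall>n x. n \<ge> N \<and> x \<in> S \<longrightarrow> norm((\<lambda>n. F n l)(k n) x - g x) < e"
  proof (rule Arzela_Ascoli[of S "\<lambda>n. F n l" M])
    show "compact S" by fact
    show "norm (F n l x) \<le> M" if "x \<in> S" for n x using M that by auto
    show "\<exists>d>0. \<forall>n y. y \<in> S \<and> norm (x - y) < d \<longrightarrow> norm (F n l x - F n l y) < e"
      if "x \<in> S" "0 < e" for x e using insert.prems(2)[of l x e] that by simp
  qed blast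
  obtain r :: "nat \<Rightarrow> nat" and H where rH: "strict_mono r" "\<forall>l\<in>L. continuous_on S (H l)"
     "\<forall>e>0. \<exists>N. \<forall>n\<ge>N. \<forall>l\<in>L. \<forall>x\<in>S. \<bar>F (k (r n)) l x - H l x\<bar> < e"
  proof -
    have "\<exists>(r::nat\<Rightarrow>nat) H. strict_mono r \<and> (\<forall>l\<in>L. continuous_on S (H l)) \<and>
           (\<forall>e>0. \<exists>N. \<forall>n\<ge>N. \<forall>l\<in>L. \<forall>x\<in>S. \<bar>F (k (r n)) l x - H l x\<bar> < e)"
      apply (rule insert.IH)
      subgoal for la using insert.prems(1)[of la] by blast
      subgoal for la x e using insert.prems(2)[of la x e] by blast
      done
    then show ?thesis using that by blast
  qed
  show ?case
  proof (intro exI conjI)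
    show "strict_mono (k \<circ> r)" using g(2) rH(1) by (simp add: strict_mono_def)
    show "\<forall>l'\<in>insert l L. continuous_on S ((H(l:=g)) l')" using rH(2) g(1) by auto
    show "\<forall>e>0. \<exists>N. \<forall>n\<ge>N. \<forall>l'\<in>insert l L. \<forall>x\<in>S. \<bar>F ((k \<circ> r) n) l' x - (H(l:=g)) l' x\<bar> < e"
    proof (intro allI impI)
      fix e :: real assume "e > 0"
      obtain N1 where N1: "\<forall>n x. n \<ge> N1 \<and> x \<in> S \<longrightarrow> \<bar>F (k n) l x - g x\<bar> < e" using g(3)[OF \<open>e>0\<close>] by (auto simp: real_norm_def)
      obtain N2 where N2: "\<forall>n\<ge>N2. \<forall>l\<in>L. \<forall>x\<in>S. \<bar>F (k (r n)) l x - H l x\<bar> < e" using rH(3) \<open>e>0\<close> by blast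
      show "\<exists>N. \<forall>n\<ge>N. \<forall>l'\<in>insert l L. \<forall>x\<in>S. \<bar>F ((k \<circ> r) n) l' x - (H(l:=g)) l' x\<bar> < e"
      proof (intro exI allI impI ballI)
        fix n l' x assume n: "max N1 N2 \<le> n" and l': "l' \<in> insert l L" and x: "x \<in> S"
        have "r n \<ge> n" using rH(1) seq_suble by blast
        then have a: "\<bar>F (k (r n)) l x - g x\<bar> < e" using N1 n x by auto
        show "\<bar>F ((k \<circ> r) n) l' x - (H(l:=g)) l' x\<bar> < e"
        proof (cases "l' = l")
          case True then show ?thesis using a by simp
        next
          case False then show ?thesis using N2 n x l' insert.hyps by auto
        qed
      qed
    qed
  qed
qed

locale kern =
  fixes \<Omega> :: "'a::euclidean_space set" and q :: nat and k :: "'a \<times> 'a \<Rightarrow> real"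
  assumes opn: "open \<Omega>" and bdd: "bounded \<Omega>" and kC: "Cq_on (\<Omega> \<times> \<Omega>) q k"
begin

definition "Lq = {bs::'a list. set bs \<subseteq> Basis \<and> length bs \<le> q}"
definition lift :: "'a list \<Rightarrow> ('a \<times> 'a) list" where "lift bs = map (\<lambda>b. (b, 0)) bs"
definition G :: "'a list \<Rightarrow> 'a \<times> 'a \<Rightarrow> real" where
 "G bs = (if bs = [] then k else (SOME g. continuous_on (closure (\<Omega> \<times> \<Omega>)) g \<and> (\<forall>z\<in>\<Omega>\<times>\<Omega>. g z = dpart (lift bs) k z)))"

lemma Lq_Cons: "b # bs \<in> Lq \<Longrightarrow> bs \<in> Lq \<and> b \<in> Basis" by (auto simp: Lq_def)
lemma finite_Lq: "finite Lq" unfolding Lq_def by (rule finite_lists_length_le) simp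
lemma cpt: "compact (closure \<Omega>)" using bdd by simp

lemma lift_Lq: "bs \<in> Lq \<Longrightarrow> set (lift bs) \<subseteq> Basis \<and> length (lift bs) \<le> q \<and> (lift bs \<noteq> [] \<longleftrightarrow> bs \<noteq> [])"
  by (auto simp: Lq_def lift_def Basis_prod_def)

lemma G_props: assumes "bs \<in> Lq"
  shows "continuous_on (closure \<Omega> \<times> closure \<Omega>) (G bs)" "\<And>z. z \<in> \<Omega> \<times> \<Omega> \<Longrightarrow> G bs z = dpart (lift bs) k z"
proof -
  have "continuous_on (closure (\<Omega>\<times>\<Omega>)) (G bs) \<and> (\<forall>z\<in>\<Omega>\<times>\<Omega>. G bs z = dpart (lift bs) k z)"
  proof (cases "bs = []")
    case True then show ?thesis using kC by (simp add: G_def lift_def Cq_on_def)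
  next
    case False
    have "set (lift bs) \<subseteq> Basis \<and> lift bs \<noteq> [] \<and> length (lift bs) \<le> q" using lift_Lq[OF assms] False by auto
    then have "\<exists>g. continuous_on (closure (\<Omega>\<times>\<Omega>)) g \<and> (\<forall>z\<in>\<Omega>\<times>\<Omega>. g z = dpart (lift bs) k z)"
      using kC unfolding Cq_on_def by blast
    from someI_ex[OF this] show ?thesis using False by (simp add: G_def)
  qed
  then show "continuous_on (closure \<Omega> \<times> closure \<Omega>) (G bs)" "\<And>z. z \<in> \<Omega> \<times> \<Omega> \<Longrightarrow> G bs z = dpart (lift bs) k z"
    by (auto simp: closure_Times)
qed

lemma ball_line:
  assumes "x \<in> \<Omega>" "b \<in> Basis"
  obtains e where "e > 0" "\<And>t. \<bar>t\<bar> < e \<Longrightarrow> x + t *\<^sub>R b \<in> \<Omega>"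
proof -
  obtain e where e: "e>0" "ball x e \<subseteq> \<Omega>" using opn assms(1) open_contains_ball by blast
  moreover have "x + t *\<^sub>R b \<in> ball x e" if "\<bar>t\<bar> < e" for t
    using that assms(2) by (simp add: dist_norm norm_Basis)
  ultimately show ?thesis using that by blast
qed

lemma G_deriv_int:
  assumes "b \<in> Basis" "b # bs \<in> Lq" "x \<in> \<Omega>" "y \<in> \<Omega>"
  shows "((\<lambda>t. G bs (x + t *\<^sub>R b, y)) has_real_derivative G (b # bs) (x, y)) (at 0)"
proof -
  have L: "bs \<in> Lq" using assms(2) Lq_Cons by blast
  have ll: "lift (b#bs) = (b,0) # lift bs" by (simp add: lift_def)
  have "set (lift (b#bs)) \<subseteq> Basis \<and> lift (b#bs) \<noteq> [] \<and> length (lift (b#bs)) \<le> q"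
    using lift_Lq[OF assms(2)] by auto
  then have "\<forall>z\<in>\<Omega>\<times>\<Omega>. (\<lambda>t. dpart (tl (lift (b#bs))) k (z + t *\<^sub>R hd (lift (b#bs)))) differentiable (at 0)"
    using kC unfolding Cq_on_def by blast
  then have d: "(\<lambda>t. dpart (lift bs) k ((x,y) + t *\<^sub>R (b,0))) differentiable (at 0)"
    using assms(3,4) by (simp add: ll)
  have D: "((\<lambda>t. dpart (lift bs) k ((x,y) + t *\<^sub>R (b,0))) has_real_derivative dpart (lift (b#bs)) k (x,y)) (at 0)"
    using d unfolding DERIV_deriv_iff_real_differentiable[symmetric] by (simp add: ll)
  have Gbb: "G (b#bs) (x,y) = dpart (lift (b#bs)) k (x,y)" using G_props(2)[OF assms(2)] assms by simp
  obtain e where e: "e>0" "\<And>t. \<bar>t\<bar><e \<Longrightarrow> x + t *\<^sub>R b \<in> \<Omega>" using ball_line assms(1,3) by blast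
  show ?thesis unfolding Gbb
  proof (rule has_field_derivative_transform_within_open[OF D, where S="{-e<..<e}"])
    show "open {-e<..<e}" by simp
    show "0 \<in> {-e<..<e}" using e by simp
    fix t :: real assume "t \<in> {-e<..<e}"
    then have "x + t *\<^sub>R b \<in> \<Omega>" using e(2)[of t] by (simp add: abs_less_iff)
    then show "dpart (lift bs) k ((x,y) + t *\<^sub>R (b,0)) = G bs (x + t *\<^sub>R b, y)"
      using G_props(2)[OF L, of "(x + t *\<^sub>R b, y)"] assms(4) by simp
  qed
qed

lemma G_unif:
  assumes "bs \<in> Lq" "e > 0"
  obtains d where "d > 0" "\<And>z z'. z \<in> closure \<Omega> \<times> closure \<Omega> \<Longrightarrow> z' \<in> closure \<Omega> \<times> closure \<Omega> \<Longrightarrow>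
     dist z' z < d \<Longrightarrow> \<bar>G bs z' - G bs z\<bar> < e"
proof -
  have "uniformly_continuous_on (closure \<Omega> \<times> closure \<Omega>) (G bs)"
    by (rule compact_uniformly_continuous[OF G_props(1)[OF assms(1)] compact_Times[OF cpt cpt]])
  then show ?thesis using assms(2) that unfolding uniformly_continuous_on_def dist_real_def by metis
qed

lemma G_deriv:
  assumes "b \<in> Basis" "b # bs \<in> Lq" "x \<in> \<Omega>" "y \<in> closure \<Omega>"
  shows "((\<lambda>t. G bs (x + t *\<^sub>R b, y)) has_real_derivative G (b # bs) (x, y)) (at 0)"
proof -
  obtain ys where ys: "\<And>n. ys n \<in> \<Omega>" "ys \<longlonglongrightarrow> y" using closure_sequential assms(4) by blast
  obtain e where e: "e>0" "\<And>t. \<bar>t\<bar><e \<Longrightarrow> x + t *\<^sub>R b \<in> \<Omega>" using ball_line assms(1,3) by blast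
  define \<delta> where "\<delta> = e/2"
  have \<delta>: "\<delta> > 0" "\<And>t. t \<in> {-\<delta>..\<delta>} \<Longrightarrow> x + t *\<^sub>R b \<in> \<Omega>" using e by (auto simp: \<delta>_def)
  have L: "bs \<in> Lq" using assms(2) Lq_Cons by blast
  have conv: "\<exists>N. \<forall>n\<ge>N. \<forall>t\<in>{-\<delta>..\<delta>}. \<bar>G bs' (x + t *\<^sub>R b, ys n) - G bs' (x + t *\<^sub>R b, y)\<bar> < r"
    if L': "bs' \<in> Lq" and r: "r > 0" for bs' r
  proof -
    obtain d where d: "d > 0" "\<And>z z'. z \<in> closure \<Omega> \<times> closure \<Omega> \<Longrightarrow> z' \<in> closure \<Omega> \<times> closure \<Omega> \<Longrightarrow>
       dist z' z < d \<Longrightarrow> \<bar>G bs' z' - G bs' z\<bar> < r" using G_unif[OF L' r] by blast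
    obtain N where N: "\<forall>n\<ge>N. dist (ys n) y < d" using ys(2) d(1) unfolding lim_sequentially by blast
    have "\<bar>G bs' (x + t *\<^sub>R b, ys n) - G bs' (x + t *\<^sub>R b, y)\<bar> < r" if "n \<ge> N" "t \<in> {-\<delta>..\<delta>}" for n t
    proof (rule d(2))
      show "(x + t *\<^sub>R b, y) \<in> closure \<Omega> \<times> closure \<Omega>" using \<delta>(2)[OF that(2)] assms(4) closure_subset by blast
      show "(x + t *\<^sub>R b, ys n) \<in> closure \<Omega> \<times> closure \<Omega>" using \<delta>(2)[OF that(2)] ys(1) closure_subset by blast
      show "dist (x + t *\<^sub>R b, ys n) (x + t *\<^sub>R b, y) < d" using N that(1) by (simp add: dist_Pair_Pair)
    qed
    then show ?thesis by blast
  qed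
  have "((\<lambda>t. G bs (x + t *\<^sub>R b, y)) has_real_derivative G (b#bs) (x + 0 *\<^sub>R b, y)) (at 0)"
  proof (rule real_deriv_uniform_limit[where f="\<lambda>n t. G bs (x + t *\<^sub>R b, ys n)"
        and f'="\<lambda>n t. G (b#bs) (x + t *\<^sub>R b, ys n)" and g'="\<lambda>t. G (b#bs) (x + t *\<^sub>R b, y)"])
    show "\<delta> > 0" by fact
    show "\<exists>N. \<forall>n\<ge>N. \<forall>t\<in>{-\<delta>..\<delta>}. \<bar>G (b#bs) (x + t *\<^sub>R b, ys n) - G (b#bs) (x + t *\<^sub>R b, y)\<bar> < r"
      if "r > 0" for r using conv[OF assms(2) that] .
    show "\<exists>N. \<forall>n\<ge>N. \<forall>t\<in>{-\<delta>..\<delta>}. \<bar>G bs (x + t *\<^sub>R b, ys n) - G bs (x + t *\<^sub>R b, y)\<bar> < r"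
      if "r > 0" for r using conv[OF L that] .
    fix n and t :: real assume t: "t \<in> {-\<delta>..\<delta>}"
    have "((\<lambda>s. G bs (x + t *\<^sub>R b + s *\<^sub>R b, ys n)) has_real_derivative G (b#bs) (x + t *\<^sub>R b, ys n)) (at 0)"
      using G_deriv_int[OF assms(1,2) \<delta>(2)[OF t] ys(1)] .
    then have "((\<lambda>s. G bs (x + (s + t) *\<^sub>R b, ys n)) has_real_derivative G (b#bs) (x + t *\<^sub>R b, ys n)) (at 0)"
      by (simp add: algebra_simps)
    then show "((\<lambda>t. G bs (x + t *\<^sub>R b, ys n)) has_real_derivative G (b#bs) (x + t *\<^sub>R b, ys n)) (at t)"
      using DERIV_shift[of "\<lambda>t. G bs (x + t *\<^sub>R b, ys n)" _ 0 t] by simp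
  qed
  then show ?thesis by simp
qed

end

lemma count_list_replicate': "count_list (replicate n a) b = (if a = b then n else 0)"
  by (induction n) auto

lemma ex_list_counts:
  assumes "finite A"
  shows "(\<forall>b. b \<notin> A \<longrightarrow> \<alpha> b = 0) \<Longrightarrow> \<exists>bs. set bs \<subseteq> A \<and> (\<forall>b. count_list bs b = (\<alpha> b :: nat))"
  using assms
proof (induction A arbitrary: \<alpha> rule: finite_induct)
  case empty
  then show ?case by (intro exI[of _ "[]"]) auto
next
  case (insert a A)
  have "\<forall>b. b \<notin> A \<longrightarrow> (\<alpha>(a:=0)) b = 0" using insert.prems by auto
  then obtain bs where bs: "set bs \<subseteq> A" "\<forall>b. count_list bs b = (\<alpha>(a:=0)) b" using insert.IH by blast
  show ?case
  proof (intro exI conjI allI)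
    show "set (replicate (\<alpha> a) a @ bs) \<subseteq> insert a A" using bs(1) by auto
    fix b show "count_list (replicate (\<alpha> a) a @ bs) b = \<alpha> b"
      using bs(2)[rule_format, of b] by (auto simp: count_list_replicate')
  qed
qed

lemma supn_le:
  assumes "\<And>x. x \<in> S \<Longrightarrow> \<bar>g x\<bar> \<le> E" "0 \<le> E"
  shows "supn S g \<le> E" "0 \<le> supn S g"
proof -
  have "supn S g \<le> E \<and> 0 \<le> supn S g"
  proof (cases "S = {}")
    case True then show ?thesis using assms by (simp add: supn_def)
  next
    case False
    then obtain x where x: "x \<in> S" by blast
    have bdd: "bdd_above ((\<lambda>x. \<bar>g x\<bar>) ` S)" using assms(1) by (rule bdd_aboveI2)
    have "(SUP x\<in>S. \<bar>g x\<bar>) \<le> E" using False assms(1) by (rule cSUP_least)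
    moreover have "\<bar>g x\<bar> \<le> (SUP x\<in>S. \<bar>g x\<bar>)" using x bdd by (rule cSUP_upper)
    ultimately show ?thesis using False by (simp add: supn_def)
  qed
  then show "supn S g \<le> E" "0 \<le> supn S g" by auto
qed

lemma supn_ge:
  assumes "x \<in> S" "\<And>x. x \<in> S \<Longrightarrow> \<bar>g x\<bar> \<le> E"
  shows "\<bar>g x\<bar> \<le> supn S g"
proof -
  have bdd: "bdd_above ((\<lambda>x. \<bar>g x\<bar>) ` S)" using assms(2) by (rule bdd_aboveI2)
  have "\<bar>g x\<bar> \<le> (SUP x\<in>S. \<bar>g x\<bar>)" using assms(1) bdd by (rule cSUP_upper)
  then show ?thesis using assms(1) by (auto simp: supn_def)
qed

lemma mfact_ge1: "mfact \<alpha> \<ge> 1"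
  unfolding mfact_def by (rule prod_ge_1) simp

lemma finite_mindex: "finite (mindex q :: ('a::euclidean_space \<Rightarrow> nat) set)"
proof -
  have inj: "inj_on (\<lambda>\<alpha>. restrict \<alpha> Basis) (mindex q :: ('a \<Rightarrow> nat) set)"
  proof (rule inj_onI)
    fix \<alpha> \<beta> :: "'a \<Rightarrow> nat" assume a: "\<alpha> \<in> mindex q" "\<beta> \<in> mindex q" "restrict \<alpha> Basis = restrict \<beta> Basis"
    show "\<alpha> = \<beta>"
    proof
      fix b show "\<alpha> b = \<beta> b"
      proof (cases "b \<in> Basis")
        case True then show ?thesis using fun_cong[OF a(3), of b] by simp
      next
        case False then show ?thesis using a(1,2) by (simp add: mindex_def)
      qed
    qed
  qed
  have "(\<lambda>\<alpha>. restrict \<alpha> Basis) ` (mindex q :: ('a \<Rightarrow> nat) set) \<subseteq> PiE Basis (\<lambda>_. {..q})"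
  proof
    fix f assume "f \<in> (\<lambda>\<alpha>. restrict \<alpha> Basis) ` (mindex q :: ('a \<Rightarrow> nat) set)"
    then obtain \<alpha> where \<alpha>: "\<alpha> \<in> mindex q" "f = restrict \<alpha> Basis" by blast
    have "\<alpha> b \<le> q" if "b \<in> Basis" for b
    proof -
      have "\<alpha> b \<le> (\<Sum>b\<in>Basis. \<alpha> b)" by (rule member_le_sum) (use that in auto)
      then show ?thesis using \<alpha>(1) by (simp add: mindex_def)
    qed
    then show "f \<in> PiE Basis (\<lambda>_. {..q})" using \<alpha>(2) by auto
  qed
  moreover have "finite (PiE (Basis::'a set) (\<lambda>_. {..q}))" by (rule finite_PiE) auto
  ultimately have "finite ((\<lambda>\<alpha>. restrict \<alpha> Basis) ` (mindex q :: ('a \<Rightarrow> nat) set))"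
    by (rule finite_subset)
  then show ?thesis using inj by (rule finite_imageD)
qed

lemma cont_bounded:
  fixes g :: "'a::metric_space \<Rightarrow> real"
  assumes "continuous_on S g" "compact S"
  obtains B where "B \<ge> 0" "\<And>x. x \<in> S \<Longrightarrow> \<bar>g x\<bar> \<le> B"
proof -
  have "bounded (g ` S)" using compact_continuous_image[OF assms] compact_imp_bounded by blast
  then obtain B where "\<forall>y\<in>g ` S. norm y \<le> B" unfolding bounded_iff by blast
  then have "\<And>x. x \<in> S \<Longrightarrow> \<bar>g x\<bar> \<le> max B 0" by force
  then show ?thesis using that[of "max B 0"] by simp
qed

context kern
begin

definition reps :: "('a \<Rightarrow> real) \<Rightarrow> ('a list \<Rightarrow> 'a \<Rightarrow> real) \<Rightarrow> bool" where
 "reps \<phi> H \<longleftrightarrow> (\<forall>x\<in>closure \<Omega>. \<phi> x = H [] x) \<and> (\<forall>bs\<in>Lq. continuous_on (closure \<Omega>) (H bs)) \<and>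
   (\<forall>b bs x. b \<in> Basis \<longrightarrow> b # bs \<in> Lq \<longrightarrow> x \<in> \<Omega> \<longrightarrow>
      ((\<lambda>t. H bs (x + t *\<^sub>R b)) has_real_derivative H (b # bs) x) (at 0))"

lemma Nil_Lq: "[] \<in> Lq" by (simp add: Lq_def)

lemma reps_dpart:
  assumes "reps \<phi> H"
  shows "bs \<in> Lq \<Longrightarrow> x \<in> \<Omega> \<Longrightarrow> dpart bs \<phi> x = H bs x"
proof (induction bs arbitrary: x)
  case Nil then show ?case using assms closure_subset by (auto simp: reps_def)
next
  case (Cons b bs)
  have L: "bs \<in> Lq" "b \<in> Basis" using Lq_Cons[OF Cons.prems(1)] by auto
  have D: "((\<lambda>t. H bs (x + t *\<^sub>R b)) has_real_derivative H (b#bs) x) (at 0)"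
    using assms Cons.prems L unfolding reps_def by blast
  obtain e where e: "e>0" "\<And>t. \<bar>t\<bar><e \<Longrightarrow> x + t *\<^sub>R b \<in> \<Omega>" using ball_line Cons.prems(2) L(2) by blast
  have "((\<lambda>t. dpart bs \<phi> (x + t *\<^sub>R b)) has_real_derivative H (b#bs) x) (at 0)"
  proof (rule has_field_derivative_transform_within_open[OF D, where S="{-e<..<e}"])
    show "open {-e<..<e}" by simp
    show "0 \<in> {-e<..<e}" using e by simp
    fix t :: real assume "t \<in> {-e<..<e}"
    then have "x + t *\<^sub>R b \<in> \<Omega>" using e(2)[of t] by (simp add: abs_less_iff)
    then show "H bs (x + t *\<^sub>R b) = dpart bs \<phi> (x + t *\<^sub>R b)" using Cons.IH[OF L(1)] by simp
  qed
  then show ?case by (simp add: DERIV_imp_deriv)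
qed

lemma reps_dpart_deriv:
  assumes "reps \<phi> H" "b # bs \<in> Lq" "x \<in> \<Omega>"
  shows "((\<lambda>t. dpart bs \<phi> (x + t *\<^sub>R b)) has_real_derivative H (b#bs) x) (at 0)"
proof -
  have L: "bs \<in> Lq" "b \<in> Basis" using Lq_Cons[OF assms(2)] by auto
  have D: "((\<lambda>t. H bs (x + t *\<^sub>R b)) has_real_derivative H (b#bs) x) (at 0)"
    using assms L unfolding reps_def by blast
  obtain e where e: "e>0" "\<And>t. \<bar>t\<bar><e \<Longrightarrow> x + t *\<^sub>R b \<in> \<Omega>" using ball_line assms(3) L(2) by blast
  show ?thesis
  proof (rule has_field_derivative_transform_within_open[OF D, where S="{-e<..<e}"])
    show "open {-e<..<e}" by simp
    show "0 \<in> {-e<..<e}" using e by simp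
    fix t :: real assume "t \<in> {-e<..<e}"
    then have "x + t *\<^sub>R b \<in> \<Omega>" using e(2)[of t] by (simp add: abs_less_iff)
    then show "H bs (x + t *\<^sub>R b) = dpart bs \<phi> (x + t *\<^sub>R b)" using reps_dpart[OF assms(1) L(1)] by simp
  qed
qed

lemma reps_Cq:
  assumes "reps \<phi> H"
  shows "Cq_on \<Omega> q \<phi>"
  unfolding Cq_on_def
proof (intro conjI allI impI)
  have "continuous_on (closure \<Omega>) (H [])" using assms Nil_Lq unfolding reps_def by blast
  then show "continuous_on (closure \<Omega>) \<phi>"
    by (rule continuous_on_cong[THEN iffD1, rotated 2]) (use assms in \<open>auto simp: reps_def\<close>)
  fix bs :: "'a list" assume bs: "set bs \<subseteq> Basis \<and> bs \<noteq> [] \<and> length bs \<le> q"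
  then obtain b bs' where bb: "bs = b # bs'" by (cases bs) auto
  have L: "b # bs' \<in> Lq" using bs bb by (simp add: Lq_def)
  show "\<forall>x\<in>\<Omega>. (\<lambda>t. dpart (tl bs) \<phi> (x + t *\<^sub>R hd bs)) differentiable (at 0)"
  proof
    fix x assume "x \<in> \<Omega>"
    from reps_dpart_deriv[OF assms L this]
    show "(\<lambda>t. dpart (tl bs) \<phi> (x + t *\<^sub>R hd bs)) differentiable (at 0)"
      unfolding bb by (auto intro: differentiableI has_field_derivative_imp_has_derivative)
  qed
  show "\<exists>g. continuous_on (closure \<Omega>) g \<and> (\<forall>x\<in>\<Omega>. g x = dpart bs \<phi> x)"
    using assms L reps_dpart[OF assms L] unfolding reps_def bb by auto
qed

lemma reps_kernel:
  assumes "y \<in> closure \<Omega>"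
  shows "reps (\<lambda>x. k (x,y)) (\<lambda>bs x. G bs (x,y))"
  unfolding reps_def
proof (intro conjI ballI allI impI)
  show "k (x, y) = G [] (x, y)" for x by (simp add: G_def)
  fix bs assume "bs \<in> Lq"
  show "continuous_on (closure \<Omega>) (\<lambda>x. G bs (x, y))"
    by (rule continuous_on_compose2[OF G_props(1)[OF \<open>bs \<in> Lq\<close>]])
       (use assms in \<open>auto intro!: continuous_intros\<close>)
next
  fix b bs x assume "b \<in> Basis" "b # bs \<in> Lq" "x \<in> \<Omega>"
  then show "((\<lambda>t. G bs (x + t *\<^sub>R b, y)) has_real_derivative G (b # bs) (x, y)) (at 0)"
    using G_deriv assms by blast
qed

lemma reps_sum:
  assumes "\<And>i. i < N \<Longrightarrow> ys i \<in> closure \<Omega>"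
  shows "reps (\<lambda>x. \<Sum>i<N. c i * k (x, ys i)) (\<lambda>bs x. \<Sum>i<N. c i * G bs (x, ys i))"
  unfolding reps_def
proof (intro conjI ballI allI impI)
  show "(\<Sum>i<N. c i * k (x, ys i)) = (\<Sum>i<N. c i * G [] (x, ys i))" for x by (simp add: G_def)
  fix bs assume "bs \<in> Lq"
  have "continuous_on (closure \<Omega>) (\<lambda>x. G bs (x, ys i))" if "i < N" for i
    using reps_kernel[OF assms[OF that]] \<open>bs \<in> Lq\<close> unfolding reps_def by blast
  then show "continuous_on (closure \<Omega>) (\<lambda>x. \<Sum>i<N. c i * G bs (x, ys i))"
    by (intro continuous_on_sum continuous_on_mult continuous_on_const) auto
next
  fix b bs x assume a: "b \<in> Basis" "b # bs \<in> Lq" "x \<in> \<Omega>"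
  have "((\<lambda>t. c i * G bs (x + t *\<^sub>R b, ys i)) has_real_derivative c i * G (b # bs) (x, ys i)) (at 0)"
    if "i \<in> {..<N}" for i
    using G_deriv[OF a assms[of i]] that by (intro DERIV_cmult) auto
  then show "((\<lambda>t. \<Sum>i<N. c i * G bs (x + t *\<^sub>R b, ys i)) has_real_derivative (\<Sum>i<N. c i * G (b # bs) (x, ys i))) (at 0)"
    by (rule DERIV_sum)
qed

lemma reps_diff:
  assumes "reps \<phi> H" "reps \<psi> K"
  shows "reps (\<lambda>x. \<phi> x - \<psi> x) (\<lambda>bs x. H bs x - K bs x)"
  unfolding reps_def
proof (intro conjI ballI allI impI)
  show "\<phi> x - \<psi> x = H [] x - K [] x" if "x \<in> closure \<Omega>" for x
    using assms that unfolding reps_def by simp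
  show "continuous_on (closure \<Omega>) (\<lambda>x. H bs x - K bs x)" if "bs \<in> Lq" for bs
    using assms that unfolding reps_def by (intro continuous_on_diff) simp_all
  fix b bs x assume a: "b \<in> Basis" "b # bs \<in> Lq" "x \<in> \<Omega>"
  have "((\<lambda>t. H bs (x + t *\<^sub>R b)) has_real_derivative H (b # bs) x) (at 0)"
       "((\<lambda>t. K bs (x + t *\<^sub>R b)) has_real_derivative K (b # bs) x) (at 0)"
    using assms a unfolding reps_def by blast+
  then show "((\<lambda>t. H bs (x + t *\<^sub>R b) - K bs (x + t *\<^sub>R b)) has_real_derivative H (b # bs) x - K (b # bs) x) (at 0)"
    by (rule DERIV_diff)
qed

lemma dmulti_ex:
  assumes "\<alpha> \<in> mindex q"
  shows "\<exists>bs\<in>Lq. \<forall>v. dmulti \<alpha> v = dpart bs v"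
proof -
  have "\<forall>b. b \<notin> Basis \<longrightarrow> \<alpha> b = 0" using assms by (simp add: mindex_def)
  then have "\<exists>bs. set bs \<subseteq> Basis \<and> (\<forall>b. count_list bs b = \<alpha> b)"
    using ex_list_counts[of Basis \<alpha>] by simp
  from someI_ex[OF this] have s: "set (SOME bs. set bs \<subseteq> Basis \<and> (\<forall>b. count_list bs b = \<alpha> b)) \<subseteq> Basis"
    "\<forall>b. count_list (SOME bs. set bs \<subseteq> Basis \<and> (\<forall>b. count_list bs b = \<alpha> b)) b = \<alpha> b" by auto
  let ?bs = "SOME bs. set bs \<subseteq> Basis \<and> (\<forall>b. count_list bs b = \<alpha> b)"
  have "length ?bs = (\<Sum>b\<in>Basis. count_list ?bs b)" using sum_count_set[OF s(1)] by simp
  also have "\<dots> = (\<Sum>b\<in>Basis. \<alpha> b)" using s(2) by simp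
  also have "\<dots> \<le> q" using assms by (simp add: mindex_def)
  finally have "?bs \<in> Lq" using s(1) by (simp add: Lq_def)
  then show ?thesis unfolding dmulti_def by blast
qed

lemma zero_mindex: "(\<lambda>_. 0) \<in> mindex q" by (simp add: mindex_def)

lemma dmulti_zero: "dmulti (\<lambda>_. 0) (v::'a \<Rightarrow> real) = v"
proof -
  have "\<exists>bs::'a list. set bs \<subseteq> Basis \<and> (\<forall>b. count_list bs b = 0)" by (intro exI[of _ "[]"]) simp
  from someI_ex[OF this] have "\<forall>b. count_list (SOME bs::'a list. set bs \<subseteq> Basis \<and> (\<forall>b. count_list bs b = 0)) b = 0"
    by blast
  then have "\<forall>b. b \<notin> set (SOME bs::'a list. set bs \<subseteq> Basis \<and> (\<forall>b. count_list bs b = 0))"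
    by (simp add: count_list_0_iff)
  then have eq: "(SOME bs::'a list. set bs \<subseteq> Basis \<and> (\<forall>b. count_list bs b = 0)) = []"
    by (cases "(SOME bs::'a list. set bs \<subseteq> Basis \<and> (\<forall>b. count_list bs b = 0))") auto
  show ?thesis unfolding dmulti_def by (subst eq) simp
qed

lemma Cq_norm_bound:
  fixes Eb :: real
  assumes "reps \<phi> H" "0 \<le> (Eb::real)" "\<And>bs x. bs \<in> Lq \<Longrightarrow> x \<in> \<Omega> \<Longrightarrow> \<bar>H bs x\<bar> \<le> Eb"
  shows "0 \<le> Cq_norm \<Omega> q \<phi>" "Cq_norm \<Omega> q \<phi> \<le> real (card (mindex q :: ('a \<Rightarrow> nat) set)) * Eb"
proof -
  have t: "0 \<le> supn \<Omega> (dmulti \<alpha> \<phi>) / mfact \<alpha> \<and> supn \<Omega> (dmulti \<alpha> \<phi>) / mfact \<alpha> \<le> Eb"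
    if a: "\<alpha> \<in> mindex q" for \<alpha> :: "'a \<Rightarrow> nat"
  proof -
    obtain bs where bs: "bs \<in> Lq" "\<And>v. dmulti \<alpha> v = dpart bs v" using dmulti_ex[OF a] by blast
    have hb: "\<bar>dmulti \<alpha> \<phi> x\<bar> \<le> Eb" if "x \<in> \<Omega>" for x
      using assms(3)[OF bs(1) that] reps_dpart[OF assms(1) bs(1) that] bs(2) by simp
    have s: "supn \<Omega> (dmulti \<alpha> \<phi>) \<le> Eb" "0 \<le> supn \<Omega> (dmulti \<alpha> \<phi>)"
      using supn_le[of \<Omega> "dmulti \<alpha> \<phi>" Eb, OF hb assms(2)] by auto
    have m: "mfact \<alpha> \<ge> 1" by (rule mfact_ge1)
    have "supn \<Omega> (dmulti \<alpha> \<phi>) / mfact \<alpha> \<le> supn \<Omega> (dmulti \<alpha> \<phi>)"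
      using m s(2) by (simp add: divide_le_eq mult_le_cancel_left1)
    then show ?thesis using s m by simp
  qed
  show "0 \<le> Cq_norm \<Omega> q \<phi>" unfolding Cq_norm_def using t by (intro sum_nonneg) blast
  show "Cq_norm \<Omega> q \<phi> \<le> real (card (mindex q :: ('a \<Rightarrow> nat) set)) * Eb"
    unfolding Cq_norm_def using t by (intro sum_bounded_above) blast
qed

lemma Cq_dpart_bounded:
  assumes "Cq_on \<Omega> q v" "bs \<in> Lq"
  obtains B where "B \<ge> 0" "\<And>x. x \<in> \<Omega> \<Longrightarrow> \<bar>dpart bs v x\<bar> \<le> B"
proof (cases "bs = []")
  case True
  have "continuous_on (closure \<Omega>) v" using assms(1) by (simp add: Cq_on_def)
  then obtain B where B: "B \<ge> 0" "\<And>x. x \<in> closure \<Omega> \<Longrightarrow> \<bar>v x\<bar> \<le> B" using cont_bounded cpt by blast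
  have "\<And>x. x \<in> \<Omega> \<Longrightarrow> \<bar>dpart bs v x\<bar> \<le> B" using True B(2) closure_subset by auto
  then show ?thesis using that B(1) by blast
next
  case False
  then obtain g where g: "continuous_on (closure \<Omega>) g" "\<forall>x\<in>\<Omega>. g x = dpart bs v x"
    using assms unfolding Cq_on_def Lq_def by blast
  then obtain B where "B \<ge> 0" "\<And>x. x \<in> closure \<Omega> \<Longrightarrow> \<bar>g x\<bar> \<le> B" using cont_bounded cpt by blast
  then show ?thesis using that g(2) closure_subset by force
qed

lemma sup_le_Cq_norm:
  assumes "Cq_on \<Omega> q v"
  shows "supn \<Omega> v \<le> Cq_norm \<Omega> q v"
proof -
  have nn: "0 \<le> supn \<Omega> (dmulti \<alpha> v) / mfact \<alpha>" if a: "\<alpha> \<in> mindex q" for \<alpha> :: "'a \<Rightarrow> nat"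
  proof -
    obtain bs where bs: "bs \<in> Lq" "\<And>v. dmulti \<alpha> v = dpart bs v" using dmulti_ex[OF a] by blast
    obtain B where B: "B \<ge> 0" "\<And>x. x \<in> \<Omega> \<Longrightarrow> \<bar>dpart bs v x\<bar> \<le> B" using Cq_dpart_bounded[OF assms bs(1)] by blast
    have "0 \<le> supn \<Omega> (dmulti \<alpha> v)" using supn_le(2)[of \<Omega> "dmulti \<alpha> v" B] B bs(2) by simp
    then show ?thesis using mfact_ge1[of \<alpha>] by simp
  qed
  have "supn \<Omega> (dmulti (\<lambda>_. 0) v) / mfact (\<lambda>_::'a. 0::nat) \<le> Cq_norm \<Omega> q v"
    unfolding Cq_norm_def
    by (rule member_le_sum[where i="\<lambda>_. 0" and A="mindex q" and f="\<lambda>\<alpha>. supn \<Omega> (dmulti \<alpha> v) / mfact \<alpha>", OF zero_mindex]) (use nn finite_mindex in auto)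
  then show ?thesis by (simp add: dmulti_zero mfact_def)
qed

lemma abs_le_supn:
  assumes "Cq_on \<Omega> q v" "x \<in> closure \<Omega>"
  shows "\<bar>v x\<bar> \<le> supn \<Omega> v"
proof -
  obtain B where B: "B \<ge> 0" "\<And>x. x \<in> \<Omega> \<Longrightarrow> \<bar>dpart [] v x\<bar> \<le> B" using Cq_dpart_bounded[OF assms(1) Nil_Lq] by blast
  have "\<forall>y\<in>\<Omega>. norm (v y) \<le> supn \<Omega> v" using supn_ge[of _ \<Omega> v B] B by simp
  moreover have "continuous_on (closure \<Omega>) v" using assms(1) by (simp add: Cq_on_def)
  ultimately show ?thesis using continuous_on_closure_norm_le[of \<Omega> v _ x] assms(2) by simp
qed

end

context kern
begin

lemma G_bound:
  obtains B where "B \<ge> 0" "\<And>bs z. bs \<in> Lq \<Longrightarrow> z \<in> closure \<Omega> \<times> closure \<Omega> \<Longrightarrow> \<bar>G bs z\<bar> \<le> B"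
proof -
  have "\<forall>bs\<in>Lq. \<exists>M. \<forall>z\<in>closure \<Omega> \<times> closure \<Omega>. \<bar>G bs z\<bar> \<le> M"
  proof
    fix bs assume "bs \<in> Lq"
    obtain M where "M \<ge> 0" "\<And>z. z \<in> closure \<Omega> \<times> closure \<Omega> \<Longrightarrow> \<bar>G bs z\<bar> \<le> M"
      using cont_bounded[OF G_props(1)[OF \<open>bs \<in> Lq\<close>] compact_Times[OF cpt cpt]] by blast
    then show "\<exists>M. \<forall>z\<in>closure \<Omega> \<times> closure \<Omega>. \<bar>G bs z\<bar> \<le> M" by blast
  qed
  from bchoice[OF this] obtain M where M: "\<forall>bs\<in>Lq. \<forall>z\<in>closure \<Omega> \<times> closure \<Omega>. \<bar>G bs z\<bar> \<le> M bs"
    by blast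
  have "\<bar>G bs z\<bar> \<le> (\<Sum>bs\<in>Lq. \<bar>M bs\<bar>)" if "bs \<in> Lq" "z \<in> closure \<Omega> \<times> closure \<Omega>" for bs z
  proof -
    have "\<bar>G bs z\<bar> \<le> \<bar>M bs\<bar>" using M that by force
    also have "\<dots> \<le> (\<Sum>bs\<in>Lq. \<bar>M bs\<bar>)"
      by (rule member_le_sum[where f="\<lambda>bs. \<bar>M bs\<bar>", OF that(1)]) (use finite_Lq in auto)
    finally show ?thesis .
  qed
  moreover have "0 \<le> (\<Sum>bs\<in>Lq. \<bar>M bs\<bar>)" by (rule sum_nonneg) simp
  ultimately show ?thesis using that by blast
qed

lemma sum_bound:
  assumes "\<And>bs z. bs \<in> Lq \<Longrightarrow> z \<in> closure \<Omega> \<times> closure \<Omega> \<Longrightarrow> \<bar>G bs z\<bar> \<le> B"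
    and "\<And>i. i < N \<Longrightarrow> ys i \<in> closure \<Omega>" "bs \<in> Lq" "x \<in> closure \<Omega>"
  shows "\<bar>\<Sum>i<N. c i * G bs (x, ys i)\<bar> \<le> (\<Sum>i<N. \<bar>c i\<bar>) * B"
proof -
  have "\<bar>\<Sum>i<N. c i * G bs (x, ys i)\<bar> \<le> (\<Sum>i<N. \<bar>c i * G bs (x, ys i)\<bar>)" by (rule sum_abs)
  also have "\<dots> \<le> (\<Sum>i<N. \<bar>c i\<bar> * B)"
  proof (rule sum_mono)
    fix i assume "i \<in> {..<N}"
    then have "\<bar>G bs (x, ys i)\<bar> \<le> B" using assms by auto
    then show "\<bar>c i * G bs (x, ys i)\<bar> \<le> \<bar>c i\<bar> * B" by (simp add: abs_mult mult_left_mono)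
  qed
  also have "\<dots> = (\<Sum>i<N. \<bar>c i\<bar>) * B" by (simp add: sum_distrib_right)
  finally show ?thesis .
qed

lemma compact_family:
  fixes N :: "nat \<Rightarrow> nat" and ys :: "nat \<Rightarrow> nat \<Rightarrow> 'a" and c :: "nat \<Rightarrow> nat \<Rightarrow> real"
  assumes ys: "\<And>n i. i < N n \<Longrightarrow> ys n i \<in> closure \<Omega>" and cM: "\<And>n. (\<Sum>i<N n. \<bar>c n i\<bar>) \<le> M"
  shows "\<exists>(r::nat\<Rightarrow>nat) g. strict_mono r \<and> Cq_on \<Omega> q g \<and>
     (\<lambda>n. Cq_norm \<Omega> q (\<lambda>x. (\<Sum>i<N (r n). c (r n) i * k (x, ys (r n) i)) - g x)) \<longlonglongrightarrow> 0"
proof -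
  obtain B where B: "B \<ge> 0" "\<And>bs z. bs \<in> Lq \<Longrightarrow> z \<in> closure \<Omega> \<times> closure \<Omega> \<Longrightarrow> \<bar>G bs z\<bar> \<le> B"
    using G_bound by blast
  define F where "F n bs x = (\<Sum>i<N n. c n i * G bs (x, ys n i))" for n bs x
  have "0 \<le> (\<Sum>i<N 0. \<bar>c 0 i\<bar>)" by (rule sum_nonneg) simp
  then have M0: "0 \<le> M" using cM[of 0] by linarith
  have repF: "reps (\<lambda>x. \<Sum>i<N n. c n i * k (x, ys n i)) (F n)" for n
    unfolding F_def using reps_sum[of "N n" "ys n" "c n"] ys by blast
  have Fb: "\<bar>F n bs x\<bar> \<le> M * B" if "bs \<in> Lq" "x \<in> closure \<Omega>" for n bs x
  proof -
    have "\<bar>F n bs x\<bar> \<le> (\<Sum>i<N n. \<bar>c n i\<bar>) * B"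
      unfolding F_def by (rule sum_bound[OF B(2) ys that])
    also have "\<dots> \<le> M * B" using cM B(1) by (rule mult_right_mono)
    finally show ?thesis .
  qed
  have eqc: "\<exists>d>0. \<forall>n y. y \<in> closure \<Omega> \<and> norm (x - y) < d \<longrightarrow> \<bar>F n bs x - F n bs y\<bar> < e"
    if bs: "bs \<in> Lq" and x: "x \<in> closure \<Omega>" and e: "0 < e" for bs x e
  proof -
    define e' where "e' = e / (M + 1)"
    have e': "e' > 0" using e M0 by (simp add: e'_def)
    obtain d where d: "d > 0" "\<And>z z'. z \<in> closure \<Omega> \<times> closure \<Omega> \<Longrightarrow> z' \<in> closure \<Omega> \<times> closure \<Omega> \<Longrightarrow>
       dist z' z < d \<Longrightarrow> \<bar>G bs z' - G bs z\<bar> < e'" using G_unif[OF bs e'] by blast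
    have "\<bar>F n bs x - F n bs y\<bar> < e" if y: "y \<in> closure \<Omega>" "norm (x - y) < d" for n y
    proof -
      have "\<bar>F n bs x - F n bs y\<bar> = \<bar>\<Sum>i<N n. c n i * (G bs (x, ys n i) - G bs (y, ys n i))\<bar>"
        unfolding F_def by (simp add: sum_subtractf[symmetric] right_diff_distrib)
      also have "\<dots> \<le> (\<Sum>i<N n. \<bar>c n i * (G bs (x, ys n i) - G bs (y, ys n i))\<bar>)" by (rule sum_abs)
      also have "\<dots> \<le> (\<Sum>i<N n. \<bar>c n i\<bar> * e')"
      proof (rule sum_mono)
        fix i assume "i \<in> {..<N n}"
        then have yi: "ys n i \<in> closure \<Omega>" using ys by auto
        have "\<bar>G bs (x, ys n i) - G bs (y, ys n i)\<bar> < e'"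
          by (rule d(2)) (use x y yi in \<open>auto simp: dist_Pair_Pair dist_norm\<close>)
        then show "\<bar>c n i * (G bs (x, ys n i) - G bs (y, ys n i))\<bar> \<le> \<bar>c n i\<bar> * e'"
          by (simp add: abs_mult mult_left_mono)
      qed
      also have "\<dots> = (\<Sum>i<N n. \<bar>c n i\<bar>) * e'" by (simp add: sum_distrib_right)
      also have "\<dots> \<le> M * e'" using cM e' by (simp add: mult_right_mono)
      also have "\<dots> < e" using M0 e unfolding e'_def by (simp add: field_simps)
      finally show ?thesis .
    qed
    then show ?thesis using d(1) by blast
  qed
  have "\<exists>(r::nat\<Rightarrow>nat) H. strict_mono r \<and> (\<forall>l\<in>Lq. continuous_on (closure \<Omega>) (H l)) \<and>
           (\<forall>e>0. \<exists>N. \<forall>n\<ge>N. \<forall>l\<in>Lq. \<forall>x\<in>closure \<Omega>. \<bar>F (r n) l x - H l x\<bar> < e)"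
  proof (rule AA_finite[OF finite_Lq cpt])
    show "\<exists>M. \<forall>n. \<forall>x\<in>closure \<Omega>. \<bar>F n l x\<bar> \<le> M" if "l \<in> Lq" for l using Fb[OF that] by blast
    show "\<exists>d>0. \<forall>n y. y \<in> closure \<Omega> \<and> norm (x - y) < d \<longrightarrow> \<bar>F n l x - F n l y\<bar> < e"
      if "l \<in> Lq" "x \<in> closure \<Omega>" "0 < e" for l x e using eqc[OF that] .
  qed
  then obtain r :: "nat \<Rightarrow> nat" and H where r: "strict_mono r" and Hc: "\<forall>l\<in>Lq. continuous_on (closure \<Omega>) (H l)"
    and Hu: "\<forall>e>0. \<exists>N. \<forall>n\<ge>N. \<forall>l\<in>Lq. \<forall>x\<in>closure \<Omega>. \<bar>F (r n) l x - H l x\<bar> < e"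
    by blast
  define g where "g = H []"
  have repg: "reps g H"
    unfolding reps_def
  proof (intro conjI ballI allI impI)
    show "g x = H [] x" for x by (simp add: g_def)
    show "continuous_on (closure \<Omega>) (H bs)" if "bs \<in> Lq" for bs using Hc that by blast
    fix b bs x assume a: "b \<in> Basis" "b # bs \<in> Lq" "x \<in> \<Omega>"
    have L: "bs \<in> Lq" using Lq_Cons[OF a(2)] by blast
    obtain e where e: "e>0" "\<And>t. \<bar>t\<bar><e \<Longrightarrow> x + t *\<^sub>R b \<in> \<Omega>" using ball_line a(1,3) by blast
    define \<delta> where "\<delta> = e/2"
    have \<delta>: "\<delta> > 0" "\<And>t. t \<in> {-\<delta>..\<delta>} \<Longrightarrow> x + t *\<^sub>R b \<in> \<Omega>" using e by (auto simp: \<delta>_def)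
    have conv: "\<exists>N. \<forall>n\<ge>N. \<forall>t\<in>{-\<delta>..\<delta>}. \<bar>F (r n) l (x + t *\<^sub>R b) - H l (x + t *\<^sub>R b)\<bar> < ee"
      if l: "l \<in> Lq" and ee: "ee > 0" for l ee
    proof -
      obtain N0 where "\<forall>n\<ge>N0. \<forall>l\<in>Lq. \<forall>x\<in>closure \<Omega>. \<bar>F (r n) l x - H l x\<bar> < ee" using Hu ee by blast
      then show ?thesis using l \<delta>(2) closure_subset by blast
    qed
    have "((\<lambda>t. H bs (x + t *\<^sub>R b)) has_real_derivative H (b#bs) (x + 0 *\<^sub>R b)) (at 0)"
    proof (rule real_deriv_uniform_limit[where f="\<lambda>n t. F (r n) bs (x + t *\<^sub>R b)"
          and f'="\<lambda>n t. F (r n) (b#bs) (x + t *\<^sub>R b)" and g'="\<lambda>t. H (b#bs) (x + t *\<^sub>R b)"])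
      show "\<delta> > 0" by fact
      show "\<exists>N. \<forall>n\<ge>N. \<forall>t\<in>{-\<delta>..\<delta>}. \<bar>F (r n) (b#bs) (x + t *\<^sub>R b) - H (b#bs) (x + t *\<^sub>R b)\<bar> < ee"
        if "ee > 0" for ee using conv[OF a(2) that] .
      show "\<exists>N. \<forall>n\<ge>N. \<forall>t\<in>{-\<delta>..\<delta>}. \<bar>F (r n) bs (x + t *\<^sub>R b) - H bs (x + t *\<^sub>R b)\<bar> < ee"
        if "ee > 0" for ee using conv[OF L that] .
      fix n and t :: real assume t: "t \<in> {-\<delta>..\<delta>}"
      have "((\<lambda>s. F (r n) bs (x + t *\<^sub>R b + s *\<^sub>R b)) has_real_derivative F (r n) (b#bs) (x + t *\<^sub>R b)) (at 0)"
        using repF[of "r n"] a \<delta>(2)[OF t] unfolding reps_def by blast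
      then have "((\<lambda>s. F (r n) bs (x + (s + t) *\<^sub>R b)) has_real_derivative F (r n) (b#bs) (x + t *\<^sub>R b)) (at 0)"
        by (simp add: algebra_simps)
      then show "((\<lambda>t. F (r n) bs (x + t *\<^sub>R b)) has_real_derivative F (r n) (b#bs) (x + t *\<^sub>R b)) (at t)"
        using DERIV_shift[of "\<lambda>t. F (r n) bs (x + t *\<^sub>R b)" _ 0 t] by simp
    qed
    then show "((\<lambda>t. H bs (x + t *\<^sub>R b)) has_real_derivative H (b # bs) x) (at 0)" by simp
  qed
  have Cg: "Cq_on \<Omega> q g" by (rule reps_Cq[OF repg])
  let ?C = "real (card (mindex q :: ('a \<Rightarrow> nat) set))"
  have "(\<lambda>n. Cq_norm \<Omega> q (\<lambda>x. (\<Sum>i<N (r n). c (r n) i * k (x, ys (r n) i)) - g x)) \<longlonglongrightarrow> 0"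
  proof (rule LIMSEQ_I)
    fix e :: real assume e: "e > 0"
    define e' where "e' = e / (?C + 1)"
    have e': "e' > 0" using e by (simp add: e'_def)
    obtain N0 where N0: "\<forall>n\<ge>N0. \<forall>l\<in>Lq. \<forall>x\<in>closure \<Omega>. \<bar>F (r n) l x - H l x\<bar> < e'" using Hu e' by blast
    have "norm (Cq_norm \<Omega> q (\<lambda>x. (\<Sum>i<N (r n). c (r n) i * k (x, ys (r n) i)) - g x) - 0) < e" if n: "n \<ge> N0" for n
    proof -
      have rd: "reps (\<lambda>x. (\<Sum>i<N (r n). c (r n) i * k (x, ys (r n) i)) - g x) (\<lambda>bs x. F (r n) bs x - H bs x)"
        by (rule reps_diff[OF repF repg])
      have bd: "\<bar>F (r n) bs x - H bs x\<bar> \<le> e'" if "bs \<in> Lq" "x \<in> \<Omega>" for bs x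
        using N0 n that closure_subset by fastforce
      have "0 \<le> Cq_norm \<Omega> q (\<lambda>x. (\<Sum>i<N (r n). c (r n) i * k (x, ys (r n) i)) - g x)"
           "Cq_norm \<Omega> q (\<lambda>x. (\<Sum>i<N (r n). c (r n) i * k (x, ys (r n) i)) - g x) \<le> ?C * e'"
        using Cq_norm_bound[OF rd _ bd] e' by auto
      moreover have "?C * e' < e" using e unfolding e'_def by (simp add: field_simps)
      ultimately show ?thesis by simp
    qed
    then show "\<exists>no. \<forall>n\<ge>no. norm (Cq_norm \<Omega> q (\<lambda>x. (\<Sum>i<N (r n). c (r n) i * k (x, ys (r n) i)) - g x) - 0) < e"
      by blast
  qed
  then show ?thesis using r Cg by blast
qed

end

theorem lemma3p9:
  fixes \<Omega> :: "'a::euclidean_space set" and q :: nat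
    and k :: "'a \<times> 'a \<Rightarrow> real"
    and nY :: "real \<Rightarrow> nat" and Y :: "real \<Rightarrow> nat \<Rightarrow> 'a" and w :: "real \<Rightarrow> nat \<Rightarrow> real"
    and nX :: "real \<Rightarrow> nat" and X :: "real \<Rightarrow> nat \<Rightarrow> 'a"
    and R :: "real \<times> real \<Rightarrow> nat \<Rightarrow> nat \<Rightarrow> real"
    and CQ CI :: real
  assumes "open \<Omega>" and "bounded \<Omega>"
    and "Cq_on (\<Omega> \<times> \<Omega>) q k"
    and "\<And>hY i. hY > 0 \<Longrightarrow> i < nY hY \<Longrightarrow> Y hY i \<in> closure \<Omega>"
    and "filterlim nY at_top (at_right 0)"
    and "\<And>hY. hY > 0 \<Longrightarrow> (\<Sum>i<nY hY. \<bar>w hY i\<bar>) \<le> CQ"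
    and "\<And>hX j. hX > 0 \<Longrightarrow> j < nX hX \<Longrightarrow> X hX j \<in> closure \<Omega>"
    and "\<And>hX hY i. hX > 0 \<Longrightarrow> hY > 0 \<Longrightarrow> i < nY hY \<Longrightarrow>
           (\<Sum>j<nX hX. \<bar>R (hX, hY) i j\<bar>) \<le> CI"
  shows "collectively_compact \<Omega> q {(hX, hY). hX > 0 \<and> hY > 0}
           (\<lambda>(hX, hY) v x. \<Sum>i<nY hY. w hY i * k (x, Y hY i) *
                              (\<Sum>j<nX hX. R (hX, hY) i j * v (X hX j)))"
proof -
  interpret kern \<Omega> q k using assms(1,2,3) by unfold_locales
  define cc where "cc hX hY v i = w hY i * (\<Sum>j<nX hX. R (hX, hY) i j * v (X hX j))"
    for hX hY and v :: "'a \<Rightarrow> real" and i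
  let ?T = "(\<lambda>(hX, hY) v x. \<Sum>i<nY hY. w hY i * k (x, Y hY i) *
                              (\<Sum>j<nX hX. R (hX, hY) i j * v (X hX j)))
           :: real \<times> real \<Rightarrow> ('a \<Rightarrow> real) \<Rightarrow> 'a \<Rightarrow> real"
  have Trep: "?T (hX, hY) v = (\<lambda>x. \<Sum>i<nY hY. cc hX hY v i * k (x, Y hY i))" for hX hY v
    by (simp add: cc_def mult_ac)
  have repT: "reps (\<lambda>x. \<Sum>i<nY hY. cc hX hY v i * k (x, Y hY i)) (\<lambda>bs x. \<Sum>i<nY hY. cc hX hY v i * G bs (x, Y hY i))"
    if "hY > 0" for hX hY v
    by (rule reps_sum) (use assms(4) that in auto)
  have ccb: "(\<Sum>i<nY hY. \<bar>cc hX hY v i\<bar>) \<le> \<bar>CQ\<bar> * \<bar>CI\<bar> * supn \<Omega> v"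
    if hX: "hX > 0" and hY: "hY > 0" and v: "Cq_on \<Omega> q v" for hX hY v
  proof -
    obtain B0 where B0: "B0 \<ge> 0" "\<And>x. x \<in> \<Omega> \<Longrightarrow> \<bar>dpart [] v x\<bar> \<le> B0"
      using Cq_dpart_bounded[OF v Nil_Lq] by blast
    have s0: "0 \<le> supn \<Omega> v" using supn_le(2)[of \<Omega> v B0] B0 by simp
    have vb: "\<bar>v (X hX j)\<bar> \<le> supn \<Omega> v" if "j < nX hX" for j
      using abs_le_supn[OF v assms(7)[OF hX that]] .
    have inner: "\<bar>\<Sum>j<nX hX. R (hX, hY) i j * v (X hX j)\<bar> \<le> \<bar>CI\<bar> * supn \<Omega> v" if i: "i < nY hY" for i
    proof -
      have "\<bar>\<Sum>j<nX hX. R (hX, hY) i j * v (X hX j)\<bar> \<le> (\<Sum>j<nX hX. \<bar>R (hX, hY) i j * v (X hX j)\<bar>)"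
        by (rule sum_abs)
      also have "\<dots> \<le> (\<Sum>j<nX hX. \<bar>R (hX, hY) i j\<bar> * supn \<Omega> v)"
        by (rule sum_mono) (use vb in \<open>auto simp: abs_mult intro: mult_left_mono\<close>)
      also have "\<dots> = (\<Sum>j<nX hX. \<bar>R (hX, hY) i j\<bar>) * supn \<Omega> v" by (simp add: sum_distrib_right)
      also have "\<dots> \<le> \<bar>CI\<bar> * supn \<Omega> v"
        using assms(8)[OF hX hY i] s0 by (intro mult_right_mono) auto
      finally show ?thesis .
    qed
    have "(\<Sum>i<nY hY. \<bar>cc hX hY v i\<bar>) \<le> (\<Sum>i<nY hY. \<bar>w hY i\<bar> * (\<bar>CI\<bar> * supn \<Omega> v))"
      by (rule sum_mono) (use inner in \<open>auto simp: cc_def abs_mult intro: mult_left_mono\<close>)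
    also have "\<dots> = (\<Sum>i<nY hY. \<bar>w hY i\<bar>) * (\<bar>CI\<bar> * supn \<Omega> v)" by (simp add: sum_distrib_right)
    also have "\<dots> \<le> \<bar>CQ\<bar> * (\<bar>CI\<bar> * supn \<Omega> v)"
      using assms(6)[OF hY] s0 by (intro mult_right_mono) auto
    finally show ?thesis by (simp add: mult_ac)
  qed
  obtain B where B: "B \<ge> 0" "\<And>bs z. bs \<in> Lq \<Longrightarrow> z \<in> closure \<Omega> \<times> closure \<Omega> \<Longrightarrow> \<bar>G bs z\<bar> \<le> B"
    using G_bound by blast
  let ?K = "real (card (mindex q :: ('a \<Rightarrow> nat) set))"
  have normT: "Cq_norm \<Omega> q (?T (hX, hY) v) \<le> (?K * B * \<bar>CQ\<bar> * \<bar>CI\<bar>) * Cq_norm \<Omega> q v"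
    if hX: "hX > 0" and hY: "hY > 0" and v: "Cq_on \<Omega> q v" for hX hY v
  proof -
    have bd: "\<bar>\<Sum>i<nY hY. cc hX hY v i * G bs (x, Y hY i)\<bar> \<le> (\<Sum>i<nY hY. \<bar>cc hX hY v i\<bar>) * B"
      if "bs \<in> Lq" "x \<in> \<Omega>" for bs x
      by (rule sum_bound[OF B(2)]) (use assms(4) hY that closure_subset in auto)
    have "Cq_norm \<Omega> q (?T (hX, hY) v) \<le> ?K * ((\<Sum>i<nY hY. \<bar>cc hX hY v i\<bar>) * B)"
      unfolding Trep by (rule Cq_norm_bound(2)[OF repT[OF hY] _ bd]) (use B(1) in \<open>auto intro: sum_nonneg\<close>)
    also have "\<dots> \<le> ?K * ((\<bar>CQ\<bar> * \<bar>CI\<bar> * supn \<Omega> v) * B)"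
      using ccb[OF hX hY v] B(1) by (intro mult_left_mono mult_right_mono) auto
    also have "\<dots> \<le> ?K * ((\<bar>CQ\<bar> * \<bar>CI\<bar> * Cq_norm \<Omega> q v) * B)"
      using sup_le_Cq_norm[OF v] B(1) by (intro mult_left_mono mult_right_mono) auto
    also have "\<dots> = (?K * B * \<bar>CQ\<bar> * \<bar>CI\<bar>) * Cq_norm \<Omega> q v" by (simp add: mult_ac)
    finally show ?thesis .
  qed
  show ?thesis
    unfolding collectively_compact_def
  proof (intro conjI)
    show "\<forall>i\<in>{(hX, hY). (hX::real) > 0 \<and> (hY::real) > 0}. \<forall>v. Cq_on \<Omega> q v \<longrightarrow> Cq_on \<Omega> q (?T i v)"
    proof (intro ballI allI impI)
      fix i v assume "i \<in> {(hX, hY). (hX::real) > 0 \<and> (hY::real) > 0}" "Cq_on \<Omega> q v"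
      then obtain hX hY where i: "i = (hX, hY)" "hX > 0" "hY > 0" by blast
      show "Cq_on \<Omega> q (?T i v)" unfolding i(1) Trep by (rule reps_Cq[OF repT[OF i(3)]])
    qed
    show "\<forall>i\<in>{(hX, hY). (hX::real) > 0 \<and> (hY::real) > 0}. \<forall>v u a b. Cq_on \<Omega> q v \<longrightarrow> Cq_on \<Omega> q u \<longrightarrow>
        (\<forall>x\<in>closure \<Omega>. ?T i (\<lambda>y. a * v y + b * u y) x = a * ?T i v x + b * ?T i u x)"
    proof (intro ballI allI impI)
      fix i v u a b x assume "i \<in> {(hX, hY). (hX::real) > 0 \<and> (hY::real) > 0}"
      then obtain hX hY where i: "i = (hX, hY)" by blast
      show "?T i (\<lambda>y. a * v y + b * u y) x = a * ?T i v x + b * ?T i u x"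
        unfolding i by (simp add: sum.distrib sum_distrib_left algebra_simps)
    qed
    show "\<forall>i\<in>{(hX, hY). (hX::real) > 0 \<and> (hY::real) > 0}. \<exists>C. \<forall>v. Cq_on \<Omega> q v \<longrightarrow> Cq_norm \<Omega> q (?T i v) \<le> C * Cq_norm \<Omega> q v"
    proof
      fix i assume "i \<in> {(hX, hY). (hX::real) > 0 \<and> (hY::real) > 0}"
      then obtain hX hY where i: "i = (hX, hY)" "hX > 0" "hY > 0" by blast
      show "\<exists>C. \<forall>v. Cq_on \<Omega> q v \<longrightarrow> Cq_norm \<Omega> q (?T i v) \<le> C * Cq_norm \<Omega> q v"
        unfolding i(1) using normT[OF i(2,3)] by blast
    qed
    show "Cq_relcompact \<Omega> q {?T i v | i v. i \<in> {(hX, hY). (hX::real) > 0 \<and> (hY::real) > 0} \<and> Cq_on \<Omega> q v \<and> Cq_norm \<Omega> q v \<le> 1}"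
      unfolding Cq_relcompact_def
    proof (intro allI impI)
      fix f :: "nat \<Rightarrow> 'a \<Rightarrow> real"
      assume hf: "\<forall>n. f n \<in> {?T i v | i v. i \<in> {(hX, hY). (hX::real) > 0 \<and> (hY::real) > 0} \<and> Cq_on \<Omega> q v \<and> Cq_norm \<Omega> q v \<le> 1}"
      have "\<forall>n. \<exists>p. fst (fst p) > 0 \<and> snd (fst p) > 0 \<and> Cq_on \<Omega> q (snd p) \<and> Cq_norm \<Omega> q (snd p) \<le> 1 \<and>
                   f n = ?T (fst p) (snd p)"
      proof
        fix n
        from hf obtain i v where iv: "f n = ?T i v" "i \<in> {(hX, hY). (hX::real) > 0 \<and> (hY::real) > 0}"
          "Cq_on \<Omega> q v" "Cq_norm \<Omega> q v \<le> 1" by blast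
        then show "\<exists>p. fst (fst p) > 0 \<and> snd (fst p) > 0 \<and> Cq_on \<Omega> q (snd p) \<and> Cq_norm \<Omega> q (snd p) \<le> 1 \<and>
                   f n = ?T (fst p) (snd p)"
          by (intro exI[of _ "(i, v)"]) auto
      qed
      from choice[OF this] obtain p where p: "\<And>n. fst (fst (p n)) > 0" "\<And>n. snd (fst (p n)) > 0"
        "\<And>n. Cq_on \<Omega> q (snd (p n))" "\<And>n. Cq_norm \<Omega> q (snd (p n)) \<le> 1" "\<And>n. f n = ?T (fst (p n)) (snd (p n))"
        by blast
      define PX where "PX n = fst (fst (p n))" for n
      define PY where "PY n = snd (fst (p n))" for n
      define V where "V n = snd (p n)" for n
      have fn: "f n = (\<lambda>x. \<Sum>i<nY (PY n). cc (PX n) (PY n) (V n) i * k (x, Y (PY n) i))" for n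
      proof -
        have "fst (p n) = (PX n, PY n)" by (simp add: PX_def PY_def)
        then show ?thesis using p(5)[of n] Trep unfolding V_def by simp
      qed
      have "\<exists>(r::nat\<Rightarrow>nat) g. strict_mono r \<and> Cq_on \<Omega> q g \<and>
        (\<lambda>n. Cq_norm \<Omega> q (\<lambda>x. (\<Sum>i<nY (PY (r n)). cc (PX (r n)) (PY (r n)) (V (r n)) i * k (x, Y (PY (r n)) i)) - g x)) \<longlonglongrightarrow> 0"
      proof (rule compact_family[where M="\<bar>CQ\<bar> * \<bar>CI\<bar>"])
        show "Y (PY n) i \<in> closure \<Omega>" if "i < nY (PY n)" for n i
          using assms(4)[OF _ that] p(2) unfolding PY_def by blast
        fix n
        have "(\<Sum>i<nY (PY n). \<bar>cc (PX n) (PY n) (V n) i\<bar>) \<le> \<bar>CQ\<bar> * \<bar>CI\<bar> * supn \<Omega> (V n)"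
          using ccb p unfolding PX_def PY_def V_def by blast
        also have "\<dots> \<le> \<bar>CQ\<bar> * \<bar>CI\<bar> * Cq_norm \<Omega> q (V n)"
          using sup_le_Cq_norm p(3) unfolding V_def by (intro mult_left_mono) auto
        also have "\<dots> \<le> \<bar>CQ\<bar> * \<bar>CI\<bar> * 1"
          using p(4) unfolding V_def by (intro mult_left_mono) auto
        finally show "(\<Sum>i<nY (PY n). \<bar>cc (PX n) (PY n) (V n) i\<bar>) \<le> \<bar>CQ\<bar> * \<bar>CI\<bar>" by simp
      qed
      then obtain r :: "nat \<Rightarrow> nat" and g where rg: "strict_mono r" "Cq_on \<Omega> q g"
        "(\<lambda>n. Cq_norm \<Omega> q (\<lambda>x. (\<Sum>i<nY (PY (r n)). cc (PX (r n)) (PY (r n)) (V (r n)) i * k (x, Y (PY (r n)) i)) - g x)) \<longlonglongrightarrow> 0"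
        by blast
      show "\<exists>(r::nat\<Rightarrow>nat) g. strict_mono r \<and> Cq_on \<Omega> q g \<and> (\<lambda>n. Cq_norm \<Omega> q (\<lambda>x. f (r n) x - g x)) \<longlonglongrightarrow> 0"
        using rg by (intro exI[of _ r] exI[of _ g]) (simp add: fn)
    qed
  qed
qed

end
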